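(* Let $R$ be a GSWNC ring in which $2$ is invertible and such that $u^2 = 1$ for every unit $u \in R$. Then $R$ is commutative.
   Context: All rings are associative with identity. An element $a$ of a ring is strongly weakly nil-clean if there exist an idempotent $e$ and a nilpotent $q$ with $eq = qe$ such that $a = q + e$ or $a = q - e$. A ring is GSWNC if every non-invertible element is strongly weakly nil-clean. *)

theory Defs
  imports Main
begin

definition unit_elem :: "'a::ring_1 \<Rightarrow> bool" where
  "unit_elem u \<longleftrightarrow> (\<exists>v. u * v = 1 \<and> v * u = 1)"

definition idempotent_elem :: "'a::ring_1 \<Rightarrow> bool" where
  "idempotent_elem e \<longleftrightarrow> e * e = e"

definition nilpotent_elem :: "'a::ring_1 \<Rightarrow> bool" where
  "nilpotent_elem q \<longleftrightarrow> (\<exists>n::nat. q ^ n = 0)"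

definition strongly_weakly_nil_clean :: "'a::ring_1 \<Rightarrow> bool" where
  "strongly_weakly_nil_clean a \<longleftrightarrow>
     (\<exists>e q. idempotent_elem e \<and> nilpotent_elem q \<and> e * q = q * e \<and>
            (a = q + e \<or> a = q - e))"

definition GSWNC :: "'a::ring_1 itself \<Rightarrow> bool" where
  "GSWNC _ \<longleftrightarrow> (\<forall>a::'a. \<not> unit_elem a \<longrightarrow> strongly_weakly_nil_clean a)"

end

theory Submission
  imports Defs
begin

lemma sqzero_zero:
  fixes q :: "'a::ring_1"
  assumes two: "unit_elem (2::'a)"
    and sq: "\<And>u::'a. unit_elem u \<Longrightarrow> u ^ 2 = 1"
    and q2: "q * q = 0"
  shows "q = 0"
proof -
  have "unit_elem (1 + q)" unfolding unit_elem_def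
    by (rule exI[of _ "1 - q"]) (simp add: algebra_simps q2)
  then have "(1 + q) ^ 2 = 1" by (rule sq)
  then have "2 * q = 0" by (simp add: power2_eq_square algebra_simps q2 mult_2)
  moreover obtain v where "v * 2 = (1::'a)" using two unfolding unit_elem_def by blast
  ultimately have "v * (2 * q) = q" by (metis mult.assoc mult_1)
  with \<open>2 * q = 0\<close> show ?thesis by simp
qed

lemma nil_zero:
  fixes q :: "'a::ring_1"
  assumes two: "unit_elem (2::'a)"
    and sq: "\<And>u::'a. unit_elem u \<Longrightarrow> u ^ 2 = 1"
  shows "q ^ n = 0 \<Longrightarrow> q = 0"
proof (induction n rule: less_induct)
  case (less n)
  show ?case
  proof (cases "n \<le> 1")
    case True
    then have "n = 0 \<or> n = 1" by auto
    then show ?thesis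
    proof
      assume "n = 0"
      then have "(1::'a) = 0" using less.prems by simp
      then have "q = q * 1" by simp
      also have "... = 0" using \<open>(1::'a) = 0\<close> by simp
      finally show ?thesis .
    qed (use less.prems in simp)
  next
    case False
    have "q ^ (n - 1) * q ^ (n - 1) = q ^ n * q ^ (n - 2)"
    proof -
      have "n - 1 + (n - 1) = n + (n - 2)" using False by simp
      then show ?thesis by (metis power_add)
    qed
    then have "q ^ (n - 1) * q ^ (n - 1) = 0" using less.prems by simp
    then have "q ^ (n - 1) = 0" using sqzero_zero[OF two sq] by blast
    then show ?thesis using less.IH[of "n - 1"] False by simp
  qed
qed

lemma idem_central:
  fixes e :: "'a::ring_1"
  assumes two: "unit_elem (2::'a)"
    and sq: "\<And>u::'a. unit_elem u \<Longrightarrow> u ^ 2 = 1"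
    and ee: "e * e = e"
  shows "e * x = x * e"
proof -
  have ee': "\<And>y. e * (e * y) = e * y" using ee by (simp add: mult.assoc[symmetric])
  have "(e * x - e * x * e) * (e * x - e * x * e) = 0"
    by (simp add: algebra_simps ee ee')
  then have a: "e * x - e * x * e = 0" using sqzero_zero[OF two sq] by blast
  have "(x * e - e * x * e) * (x * e - e * x * e) = 0"
    by (simp add: algebra_simps ee ee')
  then have b: "x * e - e * x * e = 0" using sqzero_zero[OF two sq] by blast
  from a b show ?thesis by simp
qed

theorem lemma2p49:
  assumes "GSWNC TYPE('a::ring_1)"
    and "unit_elem (2::'a)"
    and "\<And>u::'a. unit_elem u \<Longrightarrow> u ^ 2 = 1"
  shows "\<forall>x y :: 'a. x * y = y * x"
proof -
  have central: "x * y = y * x" if "\<not> unit_elem x" for x y :: 'a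
  proof -
    from assms(1) that have "strongly_weakly_nil_clean x" unfolding GSWNC_def by blast
    then obtain e q where e: "e * e = e" and q: "\<exists>n. q ^ n = 0" and x: "x = q + e \<or> x = q - e"
      unfolding strongly_weakly_nil_clean_def idempotent_elem_def nilpotent_elem_def by blast
    from q have "q = 0" using nil_zero[OF assms(2,3)] by blast
    have "e * y = y * e" by (rule idem_central[OF assms(2,3) e])
    then show ?thesis using x \<open>q = 0\<close> by (auto simp: algebra_simps)
  qed
  have uu: "u * w = w * u" if uw: "unit_elem u" "unit_elem w" for u w :: 'a
  proof -
    obtain u' where u': "u * u' = 1" "u' * u = 1" using uw(1) unfolding unit_elem_def by blast
    obtain w' where w': "w * w' = 1" "w' * w = 1" using uw(2) unfolding unit_elem_def by blast
    have "unit_elem (u * w)" unfolding unit_elem_def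
    proof (rule exI[of _ "w' * u'"])
      have "u * w * (w' * u') = u * (w * w') * u'" by (simp add: mult.assoc)
      moreover have "w' * u' * (u * w) = w' * (u' * u) * w" by (simp add: mult.assoc)
      ultimately show "u * w * (w' * u') = 1 \<and> w' * u' * (u * w) = 1" using u' w' by simp
    qed
    then have p: "u * w * (u * w) = 1" using assms(3) by (simp add: power2_eq_square)
    have uu1: "u * u = 1" using assms(3)[OF uw(1)] by (simp add: power2_eq_square)
    have ww1: "w * w = 1" using assms(3)[OF uw(2)] by (simp add: power2_eq_square)
    have "u * (u * w * (u * w)) * w = u * w" using p by simp
    also have "u * (u * w * (u * w)) * w = (u * u) * (w * u) * (w * w)" by (simp add: mult.assoc)
    finally show ?thesis using uu1 ww1 by simp
  qed
  show ?thesis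
  proof (intro allI)
    fix x y :: 'a
    show "x * y = y * x"
    proof (cases "unit_elem x")
      case False then show ?thesis by (rule central)
    next
      case True
      show ?thesis
      proof (cases "unit_elem y")
        case True2: True
        show ?thesis by (rule uu[OF True True2])
      next
        case False then show ?thesis using central[of y x] by simp
      qed
    qed
  qed
qed

end
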